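(* Let $(T_n)_{n\ge1}$ be a plane-oriented recursive tree and let $D_{n,j}$ be the degree of node $j$ in $T_n$. For fixed integers $2\le j\le n$ and every $d\in\{1,2,\dots,n-j+1\}$, $$\mathbb{P}(D_{n,j}=d)=\frac{\Gamma(d)\,\Gamma\!\left(j-\tfrac12\right)}{\Gamma\!\left(n-\tfrac12\right)}\sum_{i=0}^{d-1}\frac{(-1)^i\,\Gamma\!\left(n-1-\tfrac{i}{2}\right)}{\Gamma(i+1)\,\Gamma(d-i)\,\Gamma\!\left(j-1-\tfrac{i}{2}\right)},$$ with the convention $1/\Gamma(m)=0$ for nonpositive integers $m$.
   Context: A plane-oriented recursive tree (PORT) is the random sequence of trees $(T_n)_{n\ge1}$ defined as follows. $T_1$ is a single node labeled $1$ (the root). For $n\ge2$, $T_n$ is obtained from $T_{n-1}$ by adding a node labeled $n$ and an edge joining it to a node $i\in\{1,\dots,n-1\}$ of $T_{n-1}$, where, conditionally on $T_1,\dots,T_{n-1}$, node $i$ is chosen with probability $(c_{n-1,i}+1)/(2n-3)$, with $c_{n-1,i}$ the number of children of $i$ in $T_{n-1}$ (nodes previously attached to $i$). $D_{n,j}$ denotes the degree (number of incident edges) of the node labeled $j$ in $T_n$. Equivalently, node $i\ge2$ is chosen with probability $D_{n-1,i}/(2n-3)$ and the root with probability $(D_{n-1,1}+1)/(2n-3)$. *)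

theory Defs
  imports "HOL-Probability.Probability"
begin

text \<open>A plane-oriented recursive tree T_n (n nodes labelled 1..n) is encoded by the list
  of parents of the nodes 2, 3, ..., n: the k-th entry (0-based) is the label of the node to
  which node k+2 was attached.\<close>

definition port_children :: "nat list \<Rightarrow> nat \<Rightarrow> nat" where
  "port_children xs i = count (mset xs) i"

text \<open>Attachment weights when inserting node n into T_{n-1}: node i in {1..n-1} gets weight
  c_{n-1,i} + 1; choosing from the multiset below gives probability (c_{n-1,i}+1)/(2n-3).\<close>

definition port_weights :: "nat list \<Rightarrow> nat \<Rightarrow> nat multiset" where
  "port_weights xs n = mset xs + mset_set {1..<n}"

text \<open>Law of T_n (as parent list).  port 1 is the single root; port 0 is a dummy value.\<close>

fun port :: "nat \<Rightarrow> nat list pmf" where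
  "port 0 = return_pmf []"
| "port (Suc 0) = return_pmf []"
| "port (Suc (Suc m)) =
     bind_pmf (port (Suc m))
       (\<lambda>xs. map_pmf (\<lambda>i. xs @ [i]) (pmf_of_multiset (port_weights xs (Suc (Suc m)))))"

definition port_degree :: "nat list \<Rightarrow> nat \<Rightarrow> nat" where
  "port_degree xs j = port_children xs j + (if j = 1 then 0 else 1)"

end

theory Submission imports Defs begin


lemma port_support:
  "xs \<in> set_pmf (port m) \<Longrightarrow> 1 \<le> m \<Longrightarrow> length xs = m - 1 \<and> set xs \<subseteq> {1..<m}"
proof (induction m arbitrary: xs rule: port.induct)
  case 1 then show ?case by simp
next
  case 2 then show ?case by simp
next
  case (3 m)
  have ne: "port_weights ys (Suc (Suc m)) \<noteq> {#}" for ys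
  proof -
    have "Suc 0 \<in># port_weights ys (Suc (Suc m))" by (simp add: port_weights_def)
    then show ?thesis by auto
  qed
  from "3.prems" obtain ys i where ys: "ys \<in> set_pmf (port (Suc m))"
    and i: "i \<in> set_mset (port_weights ys (Suc (Suc m)))" and xs: "xs = ys @ [i]"
    using ne by (auto simp del: port_weights_def)
  from "3.IH"[OF ys] have "length ys = m \<and> set ys \<subseteq> {1..<Suc m}" by simp
  with i xs show ?case by (auto simp: port_weights_def)
qed

lemma measure_bind_pmf_real:
  "measure_pmf.prob (bind_pmf M N) X = (\<integral>x. measure_pmf.prob (N x) X \<partial>M)"
proof -
  have "ennreal (measure_pmf.prob (bind_pmf M N) X) = emeasure (bind_pmf M N) X"
    by (simp add: measure_pmf.emeasure_eq_measure)
  also have "\<dots> = (\<integral>\<^sup>+x. emeasure (N x) X \<partial>M)" by simp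
  also have "\<dots> = (\<integral>\<^sup>+x. ennreal (measure_pmf.prob (N x) X) \<partial>M)"
    by (simp add: measure_pmf.emeasure_eq_measure)
  also have "\<dots> = ennreal (\<integral>x. measure_pmf.prob (N x) X \<partial>M)"
    by (intro nn_integral_eq_integral measure_pmf.integrable_const_bound[where B=1]) auto
  finally show ?thesis
    by (subst (asm) ennreal_inj) (auto intro: integral_nonneg_AE)
qed

lemma deg_snoc: "port_degree (xs @ [i]) j = port_degree xs j + (if i = j then 1 else 0)"
  by (simp add: port_degree_def port_children_def)

lemma inner_prob:
  assumes xs: "xs \<in> set_pmf (port (Suc k))" and j: "2 \<le> j" "j \<le> Suc k" and d: "1 \<le> d"
  shows "measure_pmf.prob (pmf_of_multiset (port_weights xs (Suc (Suc k))))
           {i. port_degree (xs @ [i]) j = d}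
       = indicator {xs. port_degree xs j = d} xs * (1 - real d / (2 * real k + 1))
       + indicator {xs. port_degree xs j = d - 1} xs * (real (d - 1) / (2 * real k + 1))"
proof -
  define W where "W = port_weights xs (Suc (Suc k))"
  from port_support[OF xs] have len: "length xs = k" and st: "set xs \<subseteq> {1..<Suc k}" by auto
  have sz: "size W = 2 * k + 1" using len by (simp add: W_def port_weights_def)
  have ne: "W \<noteq> {#}" using sz by auto
  have cnt: "count W j = port_degree xs j" using j
    by (simp add: W_def port_weights_def port_degree_def port_children_def count_mset_set)
  have pj: "measure_pmf.prob (pmf_of_multiset W) {j} = real (port_degree xs j) / (2 * real k + 1)"
    using ne by (simp add: measure_pmf_single cnt sz)
  show ?thesis
  proof (cases "port_degree xs j = d")
    case True
    then have "{i. port_degree (xs @ [i]) j = d} = UNIV - {j}" by (auto simp: deg_snoc)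
    moreover have "measure_pmf.prob (pmf_of_multiset W) (UNIV - {j}) = 1 - measure_pmf.prob (pmf_of_multiset W) {j}"
      using measure_pmf.prob_compl[of "{j}" "pmf_of_multiset W"] by simp
    ultimately show ?thesis using True d pj by (simp add: W_def[symmetric])
  next
    case False
    show ?thesis
    proof (cases "port_degree xs j = d - 1")
      case True
      then have "{i. port_degree (xs @ [i]) j = d} = {j}" using d False by (auto simp: deg_snoc)
      then show ?thesis using True False pj by (simp add: W_def[symmetric])
    next
      case F2: False
      then have "{i. port_degree (xs @ [i]) j = d} = {}" using d False by (auto simp: deg_snoc)
      then show ?thesis using F2 False by simp
    qed
  qed
qed


lemma port_step:
  assumes j: "2 \<le> j" "j \<le> Suc k" and d: "1 \<le> d"
  shows "measure_pmf.prob (port (Suc (Suc k))) {xs. port_degree xs j = d}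
       = measure_pmf.prob (port (Suc k)) {xs. port_degree xs j = d} * (1 - real d / (2 * real k + 1))
       + measure_pmf.prob (port (Suc k)) {xs. port_degree xs j = d - 1} * (real (d - 1) / (2 * real k + 1))"
proof -
  have vim: "(\<lambda>i. xs @ [i]) -` {xs. port_degree xs j = d} = {i. port_degree (xs @ [i]) j = d}" for xs
    by auto
  have "measure_pmf.prob (port (Suc (Suc k))) {xs. port_degree xs j = d}
     = (\<integral>xs. indicator {xs. port_degree xs j = d} xs * (1 - real d / (2 * real k + 1))
       + indicator {xs. port_degree xs j = d - 1} xs * (real (d - 1) / (2 * real k + 1)) \<partial>port (Suc k))"
    unfolding port.simps measure_bind_pmf_real measure_map_pmf vim
    by (intro integral_cong_AE) (auto simp: AE_measure_pmf_iff inner_prob[OF _ j d])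
  also have "\<dots> = measure_pmf.prob (port (Suc k)) {xs. port_degree xs j = d} * (1 - real d / (2 * real k + 1))
       + measure_pmf.prob (port (Suc k)) {xs. port_degree xs j = d - 1} * (real (d - 1) / (2 * real k + 1))"
  proof -
    have I: "(\<integral>xs. indicator A xs * (c::real) \<partial>port (Suc k)) = measure_pmf.prob (port (Suc k)) A * c" for A c
      by (subst integral_mult_left_zero) (simp add: measure_pmf.emeasure_eq_measure)
    have int: "integrable (measure_pmf (port (Suc k))) (\<lambda>xs. indicator A xs * (c::real))" for A c
      by (intro measure_pmf.integrable_const_bound[where B="\<bar>c\<bar>"]) (auto simp: indicator_def)
    show ?thesis
      by (simp only: Bochner_Integration.integral_add[OF int int] I)
  qed
  finally show ?thesis .
qed

lemma port_base:
  assumes j: "2 \<le> j"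
  shows "measure_pmf.prob (port j) {xs. port_degree xs j = d} = (if d = 1 then 1 else 0)"
proof -
  have deg1: "port_degree xs j = 1" if "xs \<in> set_pmf (port j)" for xs
  proof -
    from port_support[OF that] j have "set xs \<subseteq> {1..<j}" by auto
    then have "j \<notin> set xs" by auto
    then show ?thesis using j by (simp add: port_degree_def port_children_def count_mset_0_iff)
  qed
  show ?thesis
  proof (cases "d = 1")
    case True
    have "measure_pmf.prob (port j) (UNIV - {xs. port_degree xs j = d}) = 0"
      using deg1 True by (subst measure_pmf_zero_iff) auto
    then show ?thesis using True measure_pmf.prob_compl[of "{xs. port_degree xs j = d}" "port j"] by simp
  next
    case False
    then have "measure_pmf.prob (port j) {xs. port_degree xs j = d} = 0"
      using deg1 by (subst measure_pmf_zero_iff) auto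
    then show ?thesis using False by simp
  qed
qed

definition G :: "nat \<Rightarrow> nat \<Rightarrow> nat \<Rightarrow> real" where
  "G j m d = Gamma (real j - 1/2) / Gamma (real m - 1/2) *
     (\<Sum>i<d. (-1)^i * real ((d - 1) choose i) * pochhammer (real j - 1 - real i / 2) (m - j))"

lemma sum_absorb:
  "(\<Sum>i<Suc e. (-1)^i * real (e choose i) * Q i * (real e - real i))
   = real e * (\<Sum>i<e. (-1)^i * real ((e - 1) choose i) * Q i)"
proof -
  have t: "real (e choose i) * (real e - real i) = real e * real ((e - 1) choose i)" if "i < Suc e" for i
  proof -
    have "real ((e - i) * (e choose i)) = real (e * ((e - 1) choose i))"
      by (subst binomial_absorb_comp) rule
    then show ?thesis using that by (simp add: of_nat_diff mult.commute)
  qed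
  have "(\<Sum>i<Suc e. (-1)^i * real (e choose i) * Q i * (real e - real i))
      = (\<Sum>i<Suc e. real e * ((-1)^i * real ((e - 1) choose i) * Q i))"
  proof (intro sum.cong refl)
    fix i assume "i \<in> {..<Suc e}"
    then have "i < Suc e" by simp
    have "(-1)^i * real (e choose i) * Q i * (real e - real i)
        = (-1)^i * Q i * (real (e choose i) * (real e - real i))" by (simp add: algebra_simps)
    also have "\<dots> = real e * ((-1)^i * real ((e - 1) choose i) * Q i)"
      by (subst t[OF \<open>i < Suc e\<close>]) (simp add: algebra_simps)
    finally show "(-1)^i * real (e choose i) * Q i * (real e - real i)
        = real e * ((-1)^i * real ((e - 1) choose i) * Q i)" .
  qed
  also have "\<dots> = real e * (\<Sum>i<Suc e. (-1)^i * real ((e - 1) choose i) * Q i)"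
    by (simp only: sum_distrib_left)
  also have "\<dots> = real e * (\<Sum>i<e. (-1)^i * real ((e - 1) choose i) * Q i)"
  proof (cases e)
    case 0 then show ?thesis by simp
  next
    case (Suc m)
    have "(e - 1) choose e = 0" using Suc by (simp add: binomial_eq_0)
    then show ?thesis by simp
  qed
  finally show ?thesis .
qed

lemma G_step:
  assumes j: "2 \<le> j" "j \<le> Suc k" and d: "1 \<le> d"
  shows "G j (Suc (Suc k)) d = G j (Suc k) d * (1 - real d / (2 * real k + 1))
       + G j (Suc k) (d - 1) * (real (d - 1) / (2 * real k + 1))"
proof -
  obtain e where e: "d = Suc e" using d by (cases d) auto
  define c where "c = Gamma (real j - 1/2) / Gamma (real k + 1/2)"
  define Q where "Q i = pochhammer (real j - 1 - real i / 2) (Suc k - j)" for i :: nat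
  have gk: "Gamma (real k + 1/2) > 0" by simp
  have g1: "Gamma (real (Suc (Suc k)) - 1/2) = (real k + 1/2) * Gamma (real k + 1/2)"
  proof -
    have "real k + 1/2 \<notin> \<int>\<^sub>\<le>\<^sub>0" using nonpos_Ints_nonpos by fastforce
    from Gamma_plus1[OF this] show ?thesis by (simp add: algebra_simps)
  qed
  have g0: "real (Suc k) - 1/2 = real k + 1/2" by simp
  have pq: "pochhammer (real j - 1 - real i / 2) (Suc (Suc k) - j) = Q i * (real k - real i / 2)" for i
  proof -
    have "Suc (Suc k) - j = Suc (Suc k - j)" using j by simp
    then show ?thesis using j by (simp add: Q_def pochhammer_Suc of_nat_diff algebra_simps)
  qed
  have L: "G j (Suc (Suc k)) d = c / (2 * real k + 1) *
      (\<Sum>i<Suc e. (-1)^i * real (e choose i) * Q i * (2 * real k - real i))"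
  proof -
    have S: "(\<Sum>i<Suc e. (-1)^i * real (e choose i) * pochhammer (real j - 1 - real i / 2) (Suc (Suc k) - j))
      = (\<Sum>i<Suc e. (-1)^i * real (e choose i) * Q i * (2 * real k - real i)) / 2"
      unfolding pq sum_divide_distrib by (intro sum.cong refl) (simp add: algebra_simps)
    have "G j (Suc (Suc k)) d = Gamma (real j - 1/2) / ((real k + 1/2) * Gamma (real k + 1/2)) *
      ((\<Sum>i<Suc e. (-1)^i * real (e choose i) * Q i * (2 * real k - real i)) / 2)"
      unfolding G_def e diff_Suc_1 g1 S by (rule refl)
    moreover have ar: "a / ((real k + 1/2) * b) * (S / 2) = a / b / (2 * real k + 1) * S" if "b > 0" for a b S :: real
      using that by (simp add: field_simps)
    ultimately show ?thesis unfolding c_def by (simp only: ar[OF gk])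
  qed
  have R: "G j (Suc k) d * (1 - real d / (2 * real k + 1))
       + G j (Suc k) (d - 1) * (real (d - 1) / (2 * real k + 1))
     = c / (2 * real k + 1) * ((2 * real k - real e) * (\<Sum>i<Suc e. (-1)^i * real (e choose i) * Q i)
       + real e * (\<Sum>i<e. (-1)^i * real ((e - 1) choose i) * Q i))"
  proof -
    define S1 where "S1 = (\<Sum>i<Suc e. (-1)^i * real (e choose i) * Q i)"
    define S2 where "S2 = (\<Sum>i<e. (-1)^i * real ((e - 1) choose i) * Q i)"
    have h1: "G j (Suc k) d = c * S1" unfolding G_def g0 e c_def S1_def Q_def by simp
    have h2: "G j (Suc k) (d - 1) = c * S2" unfolding G_def g0 e c_def S2_def Q_def by simp
    have "c * S1 * (1 - real (Suc e) / (2 * real k + 1)) + c * S2 * (real e / (2 * real k + 1))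
       = c / (2 * real k + 1) * ((2 * real k - real e) * S1 + real e * S2)"
    proof -
      have pos: "2 * real k + 1 \<noteq> 0" by simp
      have "1 - real (Suc e) / (2 * real k + 1) = (2 * real k - real e) / (2 * real k + 1)"
        using pos by (simp add: field_simps)
      moreover have "c * S1 * (A / D) + c * S2 * (B / D) = c / D * (A * S1 + B * S2)" for A B D :: real
        by (simp add: divide_simps) (simp add: algebra_simps)
      ultimately show ?thesis by simp
    qed
    then show ?thesis unfolding h1 h2 S1_def[symmetric] S2_def[symmetric] using e by simp
  qed
  have "(\<Sum>i<Suc e. (-1)^i * real (e choose i) * Q i * (2 * real k - real i))
      = (\<Sum>i<Suc e. (-1)^i * real (e choose i) * Q i * (2 * real k - real e))
      + (\<Sum>i<Suc e. (-1)^i * real (e choose i) * Q i * (real e - real i))"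
    by (simp add: sum.distrib[symmetric] algebra_simps)
  also have "\<dots> = (2 * real k - real e) * (\<Sum>i<Suc e. (-1)^i * real (e choose i) * Q i)
       + real e * (\<Sum>i<e. (-1)^i * real ((e - 1) choose i) * Q i)"
  proof -
    have A: "(\<Sum>i<Suc e. (-1)^i * real (e choose i) * Q i * (2 * real k - real e))
       = (2 * real k - real e) * (\<Sum>i<Suc e. (-1)^i * real (e choose i) * Q i)"
      by (subst sum_distrib_right[symmetric]) (rule mult.commute)
    show ?thesis by (simp only: A sum_absorb)
  qed
  finally show ?thesis using L R by simp
qed


lemma G_base:
  assumes d: "1 \<le> d" and j: "2 \<le> j"
  shows "G j j d = (if d = 1 then 1 else 0)"
proof -
  obtain e where e: "d = Suc e" using d by (cases d) auto
  have g: "Gamma (real j - 1/2) / Gamma (real j - 1/2) * x = x" if "Gamma (real j - 1/2) \<noteq> 0" for x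
    using that by simp
  show ?thesis
  proof (cases "e = 0")
    case True
    have "Gamma (real j - 1/2) > 0" using j by (intro Gamma_real_pos) simp
    then show ?thesis using e True by (simp add: G_def)
  next
    case False
    have "(\<Sum>i<d. (-1)^i * real ((d - 1) choose i) * pochhammer (real j - 1 - real i / 2) (j - j))
        = (\<Sum>i\<le>e. (-1)^i * of_nat (e choose i))"
      using e by (simp add: lessThan_Suc_atMost)
    also have "\<dots> = 0" using False by (intro choose_alternating_sum) simp
    finally show ?thesis using False e by (simp add: G_def)
  qed
qed

lemma port_G:
  assumes j: "2 \<le> j" and m: "j \<le> m"
  shows "1 \<le> d \<Longrightarrow> measure_pmf.prob (port m) {xs. port_degree xs j = d} = G j m d"
  using m
proof (induction m arbitrary: d rule: dec_induct)
  case base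
  then show ?case using port_base[OF j] G_base[OF _ j] by simp
next
  case (step m)
  obtain k where k: "m = Suc k" using step.hyps j by (cases m) auto
  have jk: "j \<le> Suc k" using step.hyps k by simp
  have "measure_pmf.prob (port (Suc m)) {xs. port_degree xs j = d}
     = measure_pmf.prob (port (Suc k)) {xs. port_degree xs j = d} * (1 - real d / (2 * real k + 1))
       + measure_pmf.prob (port (Suc k)) {xs. port_degree xs j = d - 1} * (real (d - 1) / (2 * real k + 1))"
    unfolding k by (rule port_step[OF j jk step.prems])
  also have "\<dots> = G j (Suc k) d * (1 - real d / (2 * real k + 1))
       + G j (Suc k) (d - 1) * (real (d - 1) / (2 * real k + 1))"
  proof (cases "d = 1")
    case True
    then show ?thesis using step.IH[of d] step.prems k by simp
  next
    case False
    then show ?thesis using step.IH[of d] step.IH[of "d - 1"] step.prems k by simp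
  qed
  also have "\<dots> = G j (Suc m) d" unfolding k by (rule G_step[OF j jk step.prems, symmetric])
  finally show ?case .
qed

lemma G_eq:
  assumes j: "2 \<le> j" "j \<le> n" and d: "1 \<le> d" "d \<le> n - j + 1"
  shows "G j n d = Gamma (real d) * Gamma (real j - 1/2) / Gamma (real n - 1/2) *
    (\<Sum>i<d. (-1) ^ i * Gamma (real n - 1 - real i / 2) *
        rGamma (real i + 1) * rGamma (real d - real i) * rGamma (real j - 1 - real i / 2))"
proof -
  have tm: "Gamma (real d) * ((-1) ^ i * Gamma (real n - 1 - real i / 2) *
        rGamma (real i + 1) * rGamma (real d - real i) * rGamma (real j - 1 - real i / 2))
      = (-1)^i * real ((d - 1) choose i) * pochhammer (real j - 1 - real i / 2) (n - j)"
    if i: "i < d" for i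
  proof -
    have a1: "Gamma (real d) = fact (d - 1)"
      using Gamma_fact[of "d - 1"] d by (simp add: of_nat_diff)
    have a2: "rGamma (real i + 1) = inverse (fact i)"
      using Gamma_fact[of i] by (simp add: rGamma_inverse_Gamma add.commute)
    have a3: "rGamma (real d - real i) = inverse (fact (d - 1 - i))"
    proof -
      have "real d - real i = 1 + real (d - 1 - i)" using i by (simp add: of_nat_diff)
      note e = this
      show ?thesis by (simp only: e rGamma_inverse_Gamma Gamma_fact)
    qed
    have A: "Gamma (real d) * rGamma (real i + 1) * rGamma (real d - real i) = real ((d - 1) choose i)"
      unfolding a1 a2 a3 using i by (simp add: binomial_fact field_simps)
    have pos: "real n - 1 - real i / 2 > 0" using i d j by linarith
    have z: "real j - 1 - real i / 2 + real (n - j) = real n - 1 - real i / 2"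
      using j by (simp add: of_nat_diff)
    have B: "Gamma (real n - 1 - real i / 2) * rGamma (real j - 1 - real i / 2)
        = pochhammer (real j - 1 - real i / 2) (n - j)"
    proof -
      have gp: "Gamma (real n - 1 - real i / 2) \<noteq> 0" using Gamma_real_pos[OF pos] by simp
      show ?thesis
        using pochhammer_rGamma[of "real j - 1 - real i / 2" "n - j"] gp
        unfolding z by (simp add: rGamma_inverse_Gamma)
    qed
    have "Gamma (real d) * ((-1) ^ i * Gamma (real n - 1 - real i / 2) *
        rGamma (real i + 1) * rGamma (real d - real i) * rGamma (real j - 1 - real i / 2))
      = (-1)^i * (Gamma (real d) * rGamma (real i + 1) * rGamma (real d - real i)) *
        (Gamma (real n - 1 - real i / 2) * rGamma (real j - 1 - real i / 2))"
      by (simp add: algebra_simps)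
    then show ?thesis unfolding A B by simp
  qed
  have "Gamma (real d) * Gamma (real j - 1/2) / Gamma (real n - 1/2) *
    (\<Sum>i<d. (-1) ^ i * Gamma (real n - 1 - real i / 2) *
        rGamma (real i + 1) * rGamma (real d - real i) * rGamma (real j - 1 - real i / 2))
    = Gamma (real j - 1/2) / Gamma (real n - 1/2) *
    (\<Sum>i<d. Gamma (real d) * ((-1) ^ i * Gamma (real n - 1 - real i / 2) *
        rGamma (real i + 1) * rGamma (real d - real i) * rGamma (real j - 1 - real i / 2)))"
    unfolding sum_distrib_left[symmetric] by (simp add: ac_simps)
  also have "\<dots> = G j n d" unfolding G_def by (simp add: tm)
  finally show ?thesis by simp
qed


theorem proposition3p1:
  fixes n j d :: nat
  assumes "2 \<le> j" and "j \<le> n" and "1 \<le> d" and "d \<le> n - j + 1"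
  shows "measure_pmf.prob (port n) {xs. port_degree xs j = d} =
    Gamma (real d) * Gamma (real j - 1/2) / Gamma (real n - 1/2) *
    (\<Sum>i<d. (-1) ^ i * Gamma (real n - 1 - real i / 2) *
        rGamma (real i + 1) * rGamma (real d - real i) * rGamma (real j - 1 - real i / 2))"
  using port_G[OF assms(1,2,3)] G_eq[OF assms] by simp

end
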